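(* Let $p\ge 2$ be an integer. If there exist constants $\alpha,\beta$ such that $\mathrm{conv}^{\leq p}_{\mathcal F}(n)\le \alpha n+\beta$ for every nonnegative integer $n$, then $\mathrm{id}^{\leq p}_{\mathcal F}(n)\le \alpha n+2\beta$ for every nonnegative integer $n$.
   Context: All graphs are finite and simple. For an oriented graph $D$ and $X\subseteq V(D)$, the inversion of $X$ reverses every arc with both endvertices in $X$; a $(\leq p)$-inversion is the inversion of a set of at most $p$ vertices. $\mathrm{id}^{\leq p}(G)$ is the maximum, over all ordered pairs $(\vec G_1,\vec G_2)$ of orientations of $G$, of the minimum number of $(\leq p)$-inversions transforming $\vec G_1$ into $\vec G_2$. $\mathrm{conv}^{\leq p}(G)$ is the minimum number of $(\leq p)$-inversions transforming an orientation of $G$ into its converse (all arcs reversed); it does not depend on the orientation. $\mathrm{id}^{\leq p}_{\mathcal F}(n)$ (resp. $\mathrm{conv}^{\leq p}_{\mathcal F}(n)$) is the maximum of $\mathrm{id}^{\leq p}(F)$ (resp. $\mathrm{conv}^{\leq p}(F)$) over all forests $F$ of order $n$. *)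

theory Defs
  imports Main "HOL-Library.Extended_Real"
begin

definition simple_graph :: "'a set \<Rightarrow> 'a set set \<Rightarrow> bool" where
  "simple_graph V E \<longleftrightarrow> finite V \<and> (\<forall>e\<in>E. \<exists>u v. u \<in> V \<and> v \<in> V \<and> u \<noteq> v \<and> e = {u, v})"

definition is_cycle :: "'a set set \<Rightarrow> 'a list \<Rightarrow> bool" where
  "is_cycle E vs \<longleftrightarrow> length vs \<ge> 3 \<and> distinct vs \<and>
     (\<forall>i. Suc i < length vs \<longrightarrow> {vs ! i, vs ! Suc i} \<in> E) \<and>
     {last vs, hd vs} \<in> E"

definition forest :: "'a set \<Rightarrow> 'a set set \<Rightarrow> bool" where
  "forest V E \<longleftrightarrow> simple_graph V E \<and> \<not> (\<exists>vs. is_cycle E vs)"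

definition orientation :: "'a set set \<Rightarrow> ('a \<times> 'a) set \<Rightarrow> bool" where
  "orientation E A \<longleftrightarrow> (\<forall>(u,v)\<in>A. {u, v} \<in> E) \<and>
     (\<forall>u v. {u, v} \<in> E \<longrightarrow> u \<noteq> v \<longrightarrow> ((u,v) \<in> A \<longleftrightarrow> (v,u) \<notin> A))"

definition invert :: "'a set \<Rightarrow> ('a \<times> 'a) set \<Rightarrow> ('a \<times> 'a) set" where
  "invert X A = {(u,v) \<in> A. \<not> (u \<in> X \<and> v \<in> X)} \<union> {(v,u) | u v. (u,v) \<in> A \<and> u \<in> X \<and> v \<in> X}"

definition converse_dg :: "('a \<times> 'a) set \<Rightarrow> ('a \<times> 'a) set" where
  "converse_dg A = {(v,u) | u v. (u,v) \<in> A}"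

text \<open>Minimum number of (\<le>p)-inversions (sets of at most p vertices of V) transforming
  A1 into A2 (infinity if impossible).\<close>
definition inv_dist :: "nat \<Rightarrow> 'a set \<Rightarrow> ('a \<times> 'a) set \<Rightarrow> ('a \<times> 'a) set \<Rightarrow> enat" where
  "inv_dist p V A1 A2 = (INF Xs \<in> {Xs. (\<forall>X\<in>set Xs. X \<subseteq> V \<and> card X \<le> p) \<and>
        fold invert Xs A1 = A2}. enat (length Xs))"

definition idp :: "nat \<Rightarrow> 'a set \<Rightarrow> 'a set set \<Rightarrow> enat" where
  "idp p V E = (SUP (A1, A2) \<in> {(A1, A2). orientation E A1 \<and> orientation E A2}. inv_dist p V A1 A2)"

text \<open>conv does not depend on the orientation; we take the supremum over all orientations
  (all values coincide).\<close>
definition convp :: "nat \<Rightarrow> 'a set \<Rightarrow> 'a set set \<Rightarrow> enat" where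
  "convp p V E = (SUP A \<in> {A. orientation E A}. inv_dist p V A (converse_dg A))"

text \<open>Forests of order n, taken (up to isomorphism) on vertex set {0..<n}.\<close>
definition id_forest :: "nat \<Rightarrow> nat \<Rightarrow> enat" where
  "id_forest p n = (SUP E \<in> {E. forest {..<n} E}. idp p {..<n} E)"

definition conv_forest :: "nat \<Rightarrow> nat \<Rightarrow> enat" where
  "conv_forest p n = (SUP E \<in> {E. forest {..<n} E}. convp p {..<n} E)"

end

theory Submission
  imports Defs "HOL-Library.Transitive_Closure_Table"
begin

definition cnt :: "'a set list \<Rightarrow> 'a \<Rightarrow> 'a \<Rightarrow> nat" where
  "cnt Xs u v = length (filter (\<lambda>X. u \<in> X \<and> v \<in> X) Xs)"

lemma cnt_sym: "cnt Xs u v = cnt Xs v u"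
  unfolding cnt_def by (metis (no_types, lifting) filter_cong)

lemma invert_mem: "(u,v) \<in> invert X A \<longleftrightarrow> (if u \<in> X \<and> v \<in> X then (v,u) \<in> A else (u,v) \<in> A)"
  unfolding invert_def by auto

lemma fold_invert_mem:
  "(u,v) \<in> fold invert Xs A \<longleftrightarrow> (if even (cnt Xs u v) then (u,v) \<in> A else (v,u) \<in> A)"
proof (induction Xs arbitrary: A)
  case Nil
  then show ?case by (simp add: cnt_def)
next
  case (Cons X Xs)
  have "cnt (X # Xs) u v = (if u \<in> X \<and> v \<in> X then Suc (cnt Xs u v) else cnt Xs u v)"
    by (simp add: cnt_def)
  moreover have "cnt Xs v u = cnt Xs u v" by (rule cnt_sym)
  ultimately show ?case using Cons[of "invert X A"]
    by (simp add: invert_mem)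
qed

lemma cyc_mono: "is_cycle E vs \<Longrightarrow> E \<subseteq> E' \<Longrightarrow> is_cycle E' vs"
  unfolding is_cycle_def by blast

lemma cobound:
  assumes "finite E" "\<forall>e\<in>E. \<exists>u v. u \<noteq> v \<and> e = {u,v}" "\<not> (\<exists>vs. is_cycle E vs)"
  shows "\<exists>col::'a\<Rightarrow>bool. \<forall>u v. {u,v} \<in> E \<longrightarrow> (col u \<noteq> col v \<longleftrightarrow> d {u,v})"
  using assms
proof (induction E rule: finite_induct)
  case empty
  then show ?case by auto
next
  case (insert e E0)
  have cyc0: "\<not> (\<exists>vs. is_cycle E0 vs)"
    using insert.prems(2) cyc_mono[of E0 _ "insert e E0"] by blast
  obtain col0 :: "'a \<Rightarrow> bool" where col0: "\<forall>u v. {u,v} \<in> E0 \<longrightarrow> (col0 u \<noteq> col0 v \<longleftrightarrow> d {u,v})"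
  proof -
    have "\<forall>e\<in>E0. \<exists>u v. u \<noteq> v \<and> e = {u,v}" using insert.prems(1) by simp
    from insert.IH[OF this cyc0] show ?thesis using that by blast
  qed
  obtain a b where ab: "a \<noteq> b" "e = {a,b}" using insert.prems(1) by blast
  show ?case
  proof (cases "col0 a \<noteq> col0 b \<longleftrightarrow> d {a,b}")
    case True
    show ?thesis
    proof (rule exI[of _ col0], intro allI impI)
      fix u v assume "{u,v} \<in> insert e E0"
      then consider "{u,v} \<in> E0" | "{u,v} = {a,b}" using ab by blast
      then show "col0 u \<noteq> col0 v \<longleftrightarrow> d {u,v}"
        using col0 True by cases (auto simp: doubleton_eq_iff insert_commute)
    qed
  next
    case False
    define r where "r = (\<lambda>x y. {x,y} \<in> E0)"
    define R where "R = {w. r\<^sup>*\<^sup>* a w}"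
    have aR: "a \<in> R" unfolding R_def by simp
    have closed: "u \<in> R \<longleftrightarrow> v \<in> R" if "{u,v} \<in> E0" for u v
    proof -
      have "r u v" "r v u" using that unfolding r_def by (auto simp: insert_commute)
      then show ?thesis unfolding R_def
        by (meson mem_Collect_eq rtranclp.rtrancl_into_rtrancl)
    qed
    have bR: "b \<notin> R"
    proof
      assume "b \<in> R"
      then obtain xs where "rtrancl_path r a xs b"
        unfolding R_def by (auto simp: rtranclp_eq_rtrancl_path)
      then obtain xs' where p: "rtrancl_path r a xs' b" and dist: "distinct (a # xs')"
        by (rule rtrancl_path_distinct)
      have ne: "xs' \<noteq> []" using p ab(1) by (auto elim: rtrancl_path.cases)
      have lst: "last xs' = b" using rtrancl_path_last[OF p ne] .
      have "xs' \<noteq> [b]"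
      proof
        assume "xs' = [b]"
        then have "r a b" using p by (auto elim: rtrancl_path.cases)
        then show False using insert.hyps(2) ab unfolding r_def by simp
      qed
      then have len: "length (a # xs') \<ge> 3" using ne lst
        by (cases xs'; cases "tl xs'"; auto)
      have "is_cycle (insert e E0) (a # xs')"
        unfolding is_cycle_def
      proof (intro conjI allI impI)
        show "3 \<le> length (a # xs')" by (rule len)
        show "distinct (a # xs')" by (rule dist)
        fix i assume "Suc i < length (a # xs')"
        then have "r ((a # xs') ! i) (xs' ! i)" using rtrancl_path_nth[OF p] by simp
        then show "{(a # xs') ! i, (a # xs') ! Suc i} \<in> insert e E0"
          unfolding r_def by simp
      next
        show "{last (a # xs'), hd (a # xs')} \<in> insert e E0"
          using ne lst ab by (auto simp: insert_commute)
      qed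
      then show False using insert.prems(2) by blast
    qed
    define col where "col = (\<lambda>w. if w \<in> R then \<not> col0 w else col0 w)"
    show ?thesis
    proof (rule exI[of _ col], intro allI impI)
      fix u v assume "{u,v} \<in> insert e E0"
      then consider "{u,v} \<in> E0" | "u = a" "v = b" | "u = b" "v = a" using ab
        by (auto simp: doubleton_eq_iff)
      then show "col u \<noteq> col v \<longleftrightarrow> d {u,v}"
      proof cases
        case 1
        then show ?thesis using col0 closed[OF 1] unfolding col_def by auto
      next
        case 2
        then show ?thesis using False aR bR unfolding col_def by auto
      next
        case 3
        then show ?thesis using False aR bR unfolding col_def by (auto simp: insert_commute)
      qed
    qed
  qed
qed


lemma sg_edge: "simple_graph V E \<Longrightarrow> {u,v} \<in> E \<Longrightarrow> u \<noteq> v \<and> u \<in> V \<and> v \<in> V"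
proof -
  assume "simple_graph V E" "{u,v} \<in> E"
  then obtain a b where ab: "a \<in> V" "b \<in> V" "a \<noteq> b" "{u,v} = {a,b}"
    unfolding simple_graph_def by blast
  then have "(u = a \<and> v = b) \<or> (u = b \<and> v = a)" by (simp add: doubleton_eq_iff)
  then show ?thesis using ab by blast
qed

lemma img2: "{a,b} = {x,y} \<Longrightarrow> {g a, g b} = {g x, g y}"
  unfolding doubleton_eq_iff by auto

lemma forest_pull:
  fixes m :: nat
  assumes F: "forest V E" and bij: "bij_betw g {..<m} W"
  defines "E' \<equiv> {{x,y} | x y. x < m \<and> y < m \<and> {g x, g y} \<in> E}"
  shows "forest {..<m} E'"
proof -
  have sg: "simple_graph V E" and nc: "\<not> (\<exists>vs. is_cycle E vs)" using F unfolding forest_def by auto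
  have mem: "a < m" if e: "e \<in> E'" and a: "a \<in> e" for e a
  proof -
    obtain x y where "e = {x,y}" "x < m" "y < m" using e unfolding E'_def by blast
    then show ?thesis using a by auto
  qed
  have edge: "{g a, g b} \<in> E" if ab: "{a,b} \<in> E'" for a b
  proof -
    obtain x y where "{a,b} = {x,y}" "{g x, g y} \<in> E" using ab unfolding E'_def by blast
    then show ?thesis using img2[of a b x y g] by simp
  qed
  have "simple_graph {..<m} E'"
    unfolding simple_graph_def
  proof (intro conjI ballI)
    fix e assume "e \<in> E'"
    then obtain x y where xy: "e = {x,y}" "x < m" "y < m" "{g x, g y} \<in> E" unfolding E'_def by blast
    then have "x \<noteq> y" using sg_edge[OF sg xy(4)] by auto
    then show "\<exists>u v. u \<in> {..<m} \<and> v \<in> {..<m} \<and> u \<noteq> v \<and> e = {u, v}" using xy by auto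
  qed simp
  moreover have "\<not> is_cycle E' vs" for vs
  proof
    assume cy: "is_cycle E' vs"
    then have len: "length vs \<ge> 3" and dist: "distinct vs"
      and ed: "\<And>i. Suc i < length vs \<Longrightarrow> {vs ! i, vs ! Suc i} \<in> E'"
      and cl: "{last vs, hd vs} \<in> E'" unfolding is_cycle_def by auto
    have ne: "vs \<noteq> []" using len by auto
    have sub: "set vs \<subseteq> {..<m}"
    proof
      fix w assume "w \<in> set vs"
      then obtain i where i: "i < length vs" "w = vs ! i" by (auto simp: in_set_conv_nth)
      show "w \<in> {..<m}"
      proof (cases "Suc i < length vs")
        case True
        then show ?thesis using mem[OF ed[OF True]] i by auto
      next
        case False
        then have "i = length vs - 1" using i(1) by linarith
        then have "w = last vs" using i ne by (simp add: last_conv_nth)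
        then show ?thesis using mem[OF cl] by auto
      qed
    qed
    have inj: "inj_on g (set vs)"
      using bij_betw_imp_inj_on[OF bij] sub inj_on_subset by blast
    have "is_cycle E (map g vs)"
      unfolding is_cycle_def
    proof (intro conjI allI impI)
      show "3 \<le> length (map g vs)" using len by simp
      show "distinct (map g vs)" using dist inj by (simp add: distinct_map)
      fix i assume "Suc i < length (map g vs)"
      then show "{map g vs ! i, map g vs ! Suc i} \<in> E" using edge[OF ed] by simp
    next
      show "{last (map g vs), hd (map g vs)} \<in> E" using edge[OF cl] ne by (simp add: last_map hd_map)
    qed
    then show False using nc by blast
  qed
  ultimately show ?thesis unfolding forest_def by blast
qed

lemma cnt_map_img:
  assumes "inj_on g M" "\<forall>X\<in>set Xs. X \<subseteq> M" "x \<in> M" "y \<in> M"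
  shows "cnt (map ((`) g) Xs) (g x) (g y) = cnt Xs x y"
  unfolding cnt_def
proof -
  have "filter (\<lambda>X. g x \<in> X \<and> g y \<in> X) (map ((`) g) Xs)
        = map ((`) g) (filter (\<lambda>X. g x \<in> g ` X \<and> g y \<in> g ` X) Xs)"
    by (simp add: filter_map comp_def)
  also have "filter (\<lambda>X. g x \<in> g ` X \<and> g y \<in> g ` X) Xs = filter (\<lambda>X. x \<in> X \<and> y \<in> X) Xs"
    using assms by (intro filter_cong) (auto simp: inj_on_image_mem_iff)
  finally show "length (filter (\<lambda>X. g x \<in> X \<and> g y \<in> X) (map ((`) g) Xs)) = length (filter (\<lambda>X. x \<in> X \<and> y \<in> X) Xs)"
    by simp
qed

lemma inv_dist_witness:
  assumes "ereal_of_enat (inv_dist p V A B) \<le> ereal c"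
  shows "\<exists>Xs. (\<forall>X\<in>set Xs. X \<subseteq> V \<and> card X \<le> p) \<and> fold invert Xs A = B \<and> real (length Xs) \<le> c"
proof -
  obtain k where k: "inv_dist p V A B = enat k"
    using assms by (cases "inv_dist p V A B") auto
  then have kc: "real k \<le> c" using assms by simp
  have "inv_dist p V A B < enat (Suc k)" using k by simp
  then obtain Xs where Xs: "Xs \<in> {Xs. (\<forall>X\<in>set Xs. X \<subseteq> V \<and> card X \<le> p) \<and> fold invert Xs A = B}"
     "enat (length Xs) < enat (Suc k)"
    unfolding inv_dist_def by (auto simp: INF_less_iff)
  then have "length Xs \<le> k" by simp
  then have "real (length Xs) \<le> real k" by simp
  then have "real (length Xs) \<le> c" using kc by linarith
  moreover have "(\<forall>X\<in>set Xs. X \<subseteq> V \<and> card X \<le> p) \<and> fold invert Xs A = B" using Xs(1) by simp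
  ultimately show ?thesis by blast
qed

lemma conv_part:
  fixes n :: nat and E :: "nat set set"
  assumes H: "\<forall>n::nat. ereal_of_enat (conv_forest p n) \<le> ereal (\<alpha> * real n + \<beta>)"
    and F: "forest {..<n} E" and W: "W \<subseteq> {..<n}"
  shows "\<exists>Xs. (\<forall>X\<in>set Xs. X \<subseteq> W \<and> card X \<le> p) \<and>
     (\<forall>u v. {u,v} \<in> E \<longrightarrow> u \<in> W \<longrightarrow> v \<in> W \<longrightarrow> odd (cnt Xs u v)) \<and>
     real (length Xs) \<le> \<alpha> * real (card W) + \<beta>"
proof -
  define m where "m = card W"
  have fW: "finite W" by (rule finite_subset[OF W]) simp
  obtain g where bij0: "bij_betw g {0..<m} W" using ex_bij_betw_nat_finite[OF fW] m_def by blast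
  have bij: "bij_betw g {..<m} W" using bij0 by (simp add: atLeast0LessThan)
  define E' where "E' = {{x,y} | x y. x < m \<and> y < m \<and> {g x, g y} \<in> E}"
  have fE': "forest {..<m} E'" using forest_pull[OF F bij] unfolding E'_def by simp
  have sgE: "simple_graph {..<n} E" using F unfolding forest_def by simp
  define A' where "A' = {(x,y). {x,y} \<in> E' \<and> x < y}"
  have oA: "orientation E' A'"
    unfolding orientation_def A'_def by (auto simp: insert_commute)
  have "inv_dist p {..<m} A' (converse_dg A') \<le> convp p {..<m} E'"
    unfolding convp_def by (rule SUP_upper) (simp add: oA)
  also have "convp p {..<m} E' \<le> conv_forest p m"
    unfolding conv_forest_def by (rule SUP_upper) (simp add: fE')
  finally have "ereal_of_enat (inv_dist p {..<m} A' (converse_dg A')) \<le> ereal (\<alpha> * real m + \<beta>)"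
    using H by (meson ereal_of_enat_le_iff order_trans)
  from inv_dist_witness[OF this] obtain Xs' where
    Xs': "\<forall>X\<in>set Xs'. X \<subseteq> {..<m} \<and> card X \<le> p" "fold invert Xs' A' = converse_dg A'"
         "real (length Xs') \<le> \<alpha> * real m + \<beta>" by blast
  have odd1: "odd (cnt Xs' x y)" if "{x,y} \<in> E'" "x < y" for x y
  proof -
    have "(y,x) \<in> converse_dg A'" using that unfolding converse_dg_def A'_def by auto
    then have "(y,x) \<in> fold invert Xs' A'" using Xs'(2) by simp
    then have "odd (cnt Xs' y x)" using that unfolding fold_invert_mem A'_def by (auto split: if_splits)
    then show ?thesis by (simp add: cnt_sym)
  qed
  have odd2: "odd (cnt Xs' x y)" if "{x,y} \<in> E'" "x \<noteq> y" for x y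
  proof (cases "x < y")
    case True then show ?thesis using odd1 that by blast
  next
    case False
    then have "y < x" using that by simp
    moreover have "{y,x} \<in> E'" using that by (simp add: insert_commute)
    ultimately have "odd (cnt Xs' y x)" using odd1 by blast
    then show ?thesis by (simp add: cnt_sym)
  qed
  define Xs where "Xs = map ((`) g) Xs'"
  have img: "g ` {..<m} = W" using bij by (simp add: bij_betw_def)
  have inj: "inj_on g {..<m}" using bij by (simp add: bij_betw_def)
  show ?thesis
  proof (intro exI[of _ Xs] conjI allI impI ballI)
    fix X assume "X \<in> set Xs"
    then obtain X' where X': "X' \<in> set Xs'" "X = g ` X'" unfolding Xs_def by auto
    then have "X' \<subseteq> {..<m}" "card X' \<le> p" using Xs'(1) by auto
    moreover have "finite X'" by (rule finite_subset[OF \<open>X' \<subseteq> {..<m}\<close>]) simp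
    ultimately show "X \<subseteq> W" "card X \<le> p" using X' img card_image_le[of X' g] by auto
  next
    fix u v assume e: "{u,v} \<in> E" "u \<in> W" "v \<in> W"
    then obtain x y where xy: "x < m" "y < m" "u = g x" "v = g y" using img by auto
    have "{x,y} \<in> E'" using xy e unfolding E'_def by auto
    moreover have "x \<noteq> y" using sg_edge[OF sgE e(1)] xy by auto
    ultimately have "odd (cnt Xs' x y)" using odd2 by blast
    moreover have "cnt Xs u v = cnt Xs' x y"
      unfolding Xs_def xy using cnt_map_img[OF inj, of Xs' x y] Xs'(1) xy by auto
    ultimately show "odd (cnt Xs u v)" by simp
  next
    show "real (length Xs) \<le> \<alpha> * real (card W) + \<beta>" using Xs'(3) unfolding Xs_def m_def by simp
  qed
qed


lemma cnt_app: "cnt (a @ b) u v = cnt a u v + cnt b u v"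
  by (simp add: cnt_def)

lemma cnt0: "\<forall>X\<in>set Xs. X \<subseteq> W \<Longrightarrow> u \<notin> W \<or> v \<notin> W \<Longrightarrow> cnt Xs u v = 0"
  unfolding cnt_def by (auto simp: filter_empty_conv)

lemma construct:
  fixes n :: nat and E :: "nat set set"
  assumes H: "\<forall>n::nat. ereal_of_enat (conv_forest p n) \<le> ereal (\<alpha> * real n + \<beta>)"
    and F: "forest {..<n} E" and o1: "orientation E A1" and o2: "orientation E A2"
  shows "\<exists>Xs. (\<forall>X\<in>set Xs. X \<subseteq> {..<n} \<and> card X \<le> p) \<and> fold invert Xs A1 = A2 \<and>
     real (length Xs) \<le> \<alpha> * real n + 2 * \<beta>"
proof -
  have sg: "simple_graph {..<n} E" and nc: "\<not> (\<exists>vs. is_cycle E vs)"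
    using F unfolding forest_def by auto
  have two: "\<forall>e\<in>E. \<exists>u v. u \<noteq> v \<and> e = {u,v}" using sg unfolding simple_graph_def by blast
  have "E \<subseteq> Pow {..<n}"
  proof
    fix e assume e: "e \<in> E"
    then obtain u v where "e = {u,v}" using two by blast
    then show "e \<in> Pow {..<n}" using sg_edge[OF sg] e by auto
  qed
  then have fE: "finite E" by (rule finite_subset) simp
  define agree where "agree u v = ((u,v) \<in> A1 \<longleftrightarrow> (u,v) \<in> A2)" for u v
  obtain col :: "nat \<Rightarrow> bool" where
    col: "\<forall>u v. {u,v} \<in> E \<longrightarrow> (col u \<noteq> col v \<longleftrightarrow> (\<forall>x y. {u,v} = {x,y} \<longrightarrow> agree x y))"
    using cobound[OF fE two nc, of "\<lambda>e. \<forall>x y. e = {x,y} \<longrightarrow> agree x y"] by blast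
  have or1: "(u,v) \<in> A1 \<longleftrightarrow> (v,u) \<notin> A1" "(u,v) \<in> A2 \<longleftrightarrow> (v,u) \<notin> A2" if "{u,v} \<in> E" for u v
    using o1 o2 sg_edge[OF sg that] that unfolding orientation_def by blast+
  have out: "(u,v) \<notin> A1" "(u,v) \<notin> A2" if "{u,v} \<notin> E" for u v
    using o1 o2 that unfolding orientation_def by blast+
  have agree_sym: "agree v u = agree u v" if "{u,v} \<in> E" for u v
    using or1[OF that] unfolding agree_def by blast
  have colE: "col u \<noteq> col v \<longleftrightarrow> agree u v" if e: "{u,v} \<in> E" for u v
  proof -
    have "(\<forall>x y. {u,v} = {x,y} \<longrightarrow> agree x y) \<longleftrightarrow> agree u v"
    proof
      assume "agree u v"
      then show "\<forall>x y. {u,v} = {x,y} \<longrightarrow> agree x y"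
        using agree_sym[OF e] by (auto simp: doubleton_eq_iff)
    qed blast
    then show ?thesis using col e by blast
  qed
  define W1 where "W1 = {v \<in> {..<n}. col v}"
  define W2 where "W2 = {v \<in> {..<n}. \<not> col v}"
  have W1s: "W1 \<subseteq> {..<n}" and W2s: "W2 \<subseteq> {..<n}" unfolding W1_def W2_def by auto
  obtain Xs1 where X1: "\<forall>X\<in>set Xs1. X \<subseteq> W1 \<and> card X \<le> p"
     "\<forall>u v. {u,v} \<in> E \<longrightarrow> u \<in> W1 \<longrightarrow> v \<in> W1 \<longrightarrow> odd (cnt Xs1 u v)"
     "real (length Xs1) \<le> \<alpha> * real (card W1) + \<beta>"
    using conv_part[OF H F W1s] by blast
  obtain Xs2 where X2: "\<forall>X\<in>set Xs2. X \<subseteq> W2 \<and> card X \<le> p"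
     "\<forall>u v. {u,v} \<in> E \<longrightarrow> u \<in> W2 \<longrightarrow> v \<in> W2 \<longrightarrow> odd (cnt Xs2 u v)"
     "real (length Xs2) \<le> \<alpha> * real (card W2) + \<beta>"
    using conv_part[OF H F W2s] by blast
  have cardW: "card W1 + card W2 = n"
  proof -
    have "W1 \<union> W2 = {..<n}" "W1 \<inter> W2 = {}" unfolding W1_def W2_def by auto
    moreover have "finite W1" "finite W2" using W1s W2s finite_subset by auto
    ultimately show ?thesis using card_Un_disjoint[of W1 W2] by simp
  qed
  define Xs where "Xs = Xs1 @ Xs2"
  have X1s: "\<forall>X\<in>set Xs1. X \<subseteq> W1" and X2s: "\<forall>X\<in>set Xs2. X \<subseteq> W2" using X1(1) X2(1) by auto
  have par: "odd (cnt Xs u v) \<longleftrightarrow> \<not> agree u v" if e: "{u,v} \<in> E" for u v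
  proof -
    have uv: "u \<in> {..<n}" "v \<in> {..<n}" using sg_edge[OF sg e] by auto
    have c: "cnt Xs u v = cnt Xs1 u v + cnt Xs2 u v" unfolding Xs_def by (rule cnt_app)
    show ?thesis
    proof (cases "col u")
      case cu: True
      show ?thesis
      proof (cases "col v")
        case True
        then have "u \<in> W1" "v \<in> W1" "u \<notin> W2" using cu uv unfolding W1_def W2_def by auto
        then have "odd (cnt Xs1 u v)" "cnt Xs2 u v = 0" using X1(2) e cnt0[OF X2s] by auto
        then show ?thesis using c colE[OF e] cu True by simp
      next
        case False
        then have "v \<notin> W1" "u \<notin> W2" using cu uv unfolding W1_def W2_def by auto
        then have "cnt Xs1 u v = 0" "cnt Xs2 u v = 0" using cnt0[OF X1s] cnt0[OF X2s] by auto
        then show ?thesis using c colE[OF e] cu False by simp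
      qed
    next
      case cu: False
      show ?thesis
      proof (cases "col v")
        case True
        then have "u \<notin> W1" "v \<notin> W2" using cu uv unfolding W1_def W2_def by auto
        then have "cnt Xs1 u v = 0" "cnt Xs2 u v = 0" using cnt0[OF X1s] cnt0[OF X2s] by auto
        then show ?thesis using c colE[OF e] cu True by simp
      next
        case False
        then have "u \<in> W2" "v \<in> W2" "u \<notin> W1" using cu uv unfolding W1_def W2_def by auto
        then have "odd (cnt Xs2 u v)" "cnt Xs1 u v = 0" using X2(2) e cnt0[OF X1s] by auto
        then show ?thesis using c colE[OF e] cu False by simp
      qed
    qed
  qed
  have feq: "fold invert Xs A1 = A2"
  proof (rule set_eqI)
    fix z :: "nat \<times> nat"
    obtain u v where z: "z = (u,v)" by (cases z)
    show "z \<in> fold invert Xs A1 \<longleftrightarrow> z \<in> A2"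
    proof (cases "{u,v} \<in> E")
      case True
      note o = or1[OF True] and pr = par[OF True]
      show ?thesis
      proof (cases "agree u v")
        case True
        then show ?thesis using pr o unfolding z fold_invert_mem agree_def by auto
      next
        case False
        then show ?thesis using pr o unfolding z fold_invert_mem agree_def by auto
      qed
    next
      case False
      moreover have "{v,u} \<notin> E" using False by (simp add: insert_commute)
      ultimately show ?thesis using out unfolding z fold_invert_mem by auto
    qed
  qed
  have "real (length Xs) \<le> \<alpha> * real n + 2 * \<beta>"
  proof -
    have "real (length Xs) = real (length Xs1) + real (length Xs2)" unfolding Xs_def by simp
    also have "\<dots> \<le> \<alpha> * real (card W1) + \<beta> + (\<alpha> * real (card W2) + \<beta>)" using X1(3) X2(3) by linarith
    also have "\<dots> = \<alpha> * real (card W1 + card W2) + 2 * \<beta>" by (simp add: algebra_simps)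
    finally show ?thesis using cardW by simp
  qed
  moreover have "\<forall>X\<in>set Xs. X \<subseteq> {..<n} \<and> card X \<le> p"
  proof
    fix X assume "X \<in> set Xs"
    then have "X \<in> set Xs1 \<or> X \<in> set Xs2" unfolding Xs_def by simp
    then show "X \<subseteq> {..<n} \<and> card X \<le> p"
    proof
      assume "X \<in> set Xs1" then show ?thesis using X1(1) W1s by blast
    next
      assume "X \<in> set Xs2" then show ?thesis using X2(1) W2s by blast
    qed
  qed
  ultimately show ?thesis using feq by blast
qed

theorem mainTheorem15:
  fixes p :: nat and \<alpha> \<beta> :: real
  assumes "p \<ge> 2"
    and "\<forall>n::nat. ereal_of_enat (conv_forest p n) \<le> ereal (\<alpha> * real n + \<beta>)"
  shows "\<forall>n::nat. ereal_of_enat (id_forest p n) \<le> ereal (\<alpha> * real n + 2 * \<beta>)"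
proof
  fix n :: nat
  note H = assms(2)
  have nn: "0 \<le> \<alpha> * real m + \<beta>" for m :: nat
  proof -
    have "0 \<le> ereal_of_enat (conv_forest p m)" by (rule ereal_of_enat_nonneg)
    also have "\<dots> \<le> ereal (\<alpha> * real m + \<beta>)" using H by blast
    finally show ?thesis by simp
  qed
  define c where "c = \<alpha> * real n + 2 * \<beta>"
  have c0: "0 \<le> c" using nn[of 0] nn[of n] unfolding c_def by simp
  have "id_forest p n \<le> enat (nat \<lfloor>c\<rfloor>)"
    unfolding id_forest_def idp_def
  proof (intro SUP_least)
    fix E :: "nat set set" and pr assume E: "E \<in> {E. forest {..<n} E}"
      and pr: "pr \<in> {(A1, A2). orientation E A1 \<and> orientation E A2}"
    obtain A1 A2 where pr': "pr = (A1, A2)" "orientation E A1" "orientation E A2" using pr by auto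
    obtain Xs where Xs: "\<forall>X\<in>set Xs. X \<subseteq> {..<n} \<and> card X \<le> p" "fold invert Xs A1 = A2"
      "real (length Xs) \<le> c"
      using construct[OF H _ pr'(2,3)] E unfolding c_def by blast
    have "inv_dist p {..<n} A1 A2 \<le> enat (length Xs)"
      unfolding inv_dist_def by (rule INF_lower) (use Xs in simp)
    also have "\<dots> \<le> enat (nat \<lfloor>c\<rfloor>)" using le_nat_floor[OF Xs(3)] by simp
    finally show "(case pr of (A1, A2) \<Rightarrow> inv_dist p {..<n} A1 A2) \<le> enat (nat \<lfloor>c\<rfloor>)"
      using pr'(1) by simp
  qed
  then have "ereal_of_enat (id_forest p n) \<le> ereal_of_enat (enat (nat \<lfloor>c\<rfloor>))"
    by (simp only: ereal_of_enat_le_iff)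
  also have "\<dots> = ereal (real (nat \<lfloor>c\<rfloor>))" by simp
  also have "\<dots> \<le> ereal c" using of_nat_floor[OF c0] by simp
  finally show "ereal_of_enat (id_forest p n) \<le> ereal (\<alpha> * real n + 2 * \<beta>)" unfolding c_def .
qed

end
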